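(* For every $n\geq 1$, the following hold in the $q$-shuffle algebra $(\mathbb V,\star)$ (polynomials taken with respect to $\star$): (i) $C_n$ is a homogeneous polynomial in $xC_0y, xC_1y,\ldots,xC_{n-1}y$ of total degree $n$, where $xC_{k-1}y$ is given degree $k$ for $1\le k\le n$; (ii) $xC_{n-1}y$ is a homogeneous polynomial in $C_1,C_2,\ldots,C_n$ of total degree $n$, where $C_k$ is given degree $k$ for $1\le k\le n$. Here $xC_{k}y$ denotes the free (concatenation) product.
   Context: $\mathbb F$ is a field of characteristic zero and $q\in\mathbb F$ is nonzero and not a root of unity; $[n]_q=(q^n-q^{-n})/(q-q^{-1})$. $\mathbb V$ is the free algebra on noncommuting letters $x,y$; a word is a product of letters (the empty word is $1$), and words form a basis. The $q$-shuffle product $\star$ on $\mathbb V$ is the bilinear product with $1\star v=v\star 1=v$ and, for nontrivial words $u=u_1\cdots u_r$, $v=v_1\cdots v_s$ (letters $u_i,v_j$), $u\star v=u_1\bigl((u_2\cdots u_r)\star v\bigr)+v_1\bigl(u\star(v_2\cdots v_s)\bigr)q^{(u_1,v_1)+(u_2,v_1)+\cdots+(u_r,v_1)}$, where juxtaposition is concatenation and $(x,x)=(y,y)=2$, $(x,y)=(y,x)=-2$. Set $\overline x=1$, $\overline y=-1$. A word $u_1\cdots u_n$ is Catalan if $\overline u_1+\cdots+\overline u_i\ge0$ for $1\le i\le n-1$ and $=0$ for $i=n$. For $n\in\mathbb N$, $C_n=\sum u_1u_2\cdots u_{2n}\,[1]_q[1+\overline u_1]_q[1+\overline u_1+\overline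 u_2]_q\cdots[1+\overline u_1+\cdots+\overline u_{2n}]_q$, summed over all Catalan words of length $2n$ (so $C_0=1$). *)

theory Defs
  imports Main
begin

text \<open>An element of the
free algebra V over the field 'a is represented by its coefficient function
on words (elements of V are the finitely supported such functions).\<close>

datatype letter = X | Y

type_synonym 'a vec = "letter list \<Rightarrow> 'a"

definition pairing :: "letter \<Rightarrow> letter \<Rightarrow> int" where
  "pairing a b = (if a = b then 2 else -2)"

definition word :: "letter list \<Rightarrow> 'a::field vec" where
  "word u = (\<lambda>w. if w = u then 1 else 0)"

fun qsh :: "'a::field \<Rightarrow> letter list \<Rightarrow> letter list \<Rightarrow> 'a vec" where
  "qsh q [] v = word v"
| "qsh q (a # u) [] = word (a # u)"
| "qsh q (a # u) (b # v) =
     (\<lambda>w. case w of [] \<Rightarrow> 0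
        | c # w' \<Rightarrow> (if c = a then qsh q u (b # v) w' else 0)
                 + (if c = b then qsh q (a # u) v w' * q powi (\<Sum>l\<leftarrow>a # u. pairing l b)
                    else 0))"

text \<open>Bilinear extension of the q-shuffle product to V (only words of length
at most that of w can contribute to the coefficient of w).\<close>
definition star :: "'a::field \<Rightarrow> 'a vec \<Rightarrow> 'a vec \<Rightarrow> 'a vec" where
  "star q f g = (\<lambda>w. \<Sum>a\<in>{a. set a \<subseteq> {X, Y} \<and> length a \<le> length w}.
                     \<Sum>b\<in>{b. set b \<subseteq> {X, Y} \<and> length b \<le> length w}.
                       f a * g b * qsh q a b w)"

definition cat :: "'a::field vec \<Rightarrow> 'a vec \<Rightarrow> 'a vec" where
  "cat f g = (\<lambda>w. \<Sum>i\<le>length w. f (take i w) * g (drop i w))"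

definition xwy :: "'a::field vec \<Rightarrow> 'a vec" where
  "xwy f = cat (word [X]) (cat f (word [Y]))"

definition bar :: "letter \<Rightarrow> int" where
  "bar l = (if l = X then 1 else -1)"

definition catalan :: "letter list \<Rightarrow> bool" where
  "catalan u \<longleftrightarrow> (\<forall>i. 1 \<le> i \<and> i \<le> length u - 1 \<longrightarrow> (\<Sum>l\<leftarrow>take i u. bar l) \<ge> 0)
                  \<and> (\<Sum>l\<leftarrow>u. bar l) = 0"

definition qint :: "'a::field \<Rightarrow> int \<Rightarrow> 'a" where
  "qint q k = (q powi k - q powi (-k)) / (q - inverse q)"

definition Cn :: "'a::field \<Rightarrow> nat \<Rightarrow> 'a vec" where
  "Cn q n = (\<lambda>w. if length w = 2 * n \<and> catalan w
                 then (\<Prod>i\<le>2 * n. qint q (1 + (\<Sum>l\<leftarrow>take i w. bar l)))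
                 else 0)"

definition star_mono :: "'a::field \<Rightarrow> (nat \<Rightarrow> 'a vec) \<Rightarrow> nat list \<Rightarrow> 'a vec" where
  "star_mono q g ks = foldr (star q) (map g ks) (word [])"

definition homog_poly :: "'a::field \<Rightarrow> (nat \<Rightarrow> 'a vec) \<Rightarrow> nat \<Rightarrow> 'a vec \<Rightarrow> bool" where
  "homog_poly q g n f \<longleftrightarrow>
     (\<exists>c :: nat list \<Rightarrow> 'a. \<forall>w. f w =
        (\<Sum>ks\<in>{ks. set ks \<subseteq> {1..n} \<and> sum_list ks = n}. c ks * star_mono q g ks w))"

end

theory Submission
  imports Defs
begin


lemma set_XY: "set (a::letter list) \<subseteq> {X, Y}"
  using letter.exhaust by auto

definition W :: "nat \<Rightarrow> letter list set" where
  "W n = {a. set a \<subseteq> {X, Y} \<and> length a \<le> n}"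

lemma W_eq: "W n = {a. length a \<le> n}"
  unfolding W_def using set_XY by auto

lemma finite_W[simp]: "finite (W n)"
  unfolding W_def by (rule finite_lists_length_le) auto

lemma star_W: "star q f g w = (\<Sum>a\<in>W (length w). \<Sum>b\<in>W (length w). f a * g b * qsh q a b w)"
  unfolding star_def W_def by simp

lemma word_apply: "word u w = (if w = u then 1 else 0)"
  unfolding word_def by simp

lemma qsh_len: "qsh q a b w \<noteq> 0 \<Longrightarrow> length w = length a + length b"
proof (induction q a b arbitrary: w rule: qsh.induct)
  case (1 q v)
  then show ?case by (auto simp: word_apply split: if_splits)
next
  case (2 q a u)
  then show ?case by (auto simp: word_apply split: if_splits)
next
  case (3 q a u b v)
  show ?case
  proof (cases w)
    case Nil
    then show ?thesis using 3 by simp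
  next
    case (Cons d w')
    have "qsh q u (b # v) w' \<noteq> 0 \<and> d = a \<or> qsh q (a # u) v w' \<noteq> 0 \<and> d = b"
      using 3(3) Cons by (auto split: if_splits)
    then show ?thesis using 3(1,2) Cons by auto
  qed
qed

lemma qsh_Nil2: "qsh q a [] = word a"
  by (cases a) auto

lemma qsh_Cons_eq: "qsh q a b (c # t) =
   (case a of [] \<Rightarrow> 0 | a0 # a' \<Rightarrow> if a0 = c then qsh q a' b t else 0)
 + (case b of [] \<Rightarrow> 0 | b0 # b' \<Rightarrow> if b0 = c then qsh q a b' t * q powi (\<Sum>l\<leftarrow>a. pairing l c) else 0)"
proof (cases a)
  case Nil
  then show ?thesis by (cases b) (auto simp: word_apply)
next
  case (Cons a0 a')
  then show ?thesis by (cases b) (auto simp: word_apply qsh_Nil2)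
qed

lemma star_alt:
  assumes "finite A" "finite B" "W (length w) \<subseteq> A" "W (length w) \<subseteq> B"
  shows "star q f g w = (\<Sum>a\<in>A. \<Sum>b\<in>B. f a * g b * qsh q a b w)"
proof -
  have "star q f g w = (\<Sum>a\<in>W (length w). \<Sum>b\<in>B. f a * g b * qsh q a b w)"
    unfolding star_W
    apply (rule sum.cong[OF refl])
    apply (rule sum.mono_neutral_left[OF assms(2) assms(4)])
    using qsh_len by (fastforce simp: W_eq)
  also have "\<dots> = (\<Sum>a\<in>A. \<Sum>b\<in>B. f a * g b * qsh q a b w)"
    apply (rule sum.mono_neutral_left[OF assms(1) assms(3)])
    apply (intro ballI sum.neutral)
    using qsh_len by (fastforce simp: W_eq)
  finally show ?thesis .
qed

lemma W_Suc: "W (Suc n) = insert [] (Cons X ` W n \<union> Cons Y ` W n)"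
  unfolding W_eq
proof (safe, goal_cases)
  case (1 x)
  then show ?case
    apply (cases x) apply simp
    subgoal for a l by (cases a) auto
    done
qed auto

lemma sum_W_Suc: "(\<Sum>a\<in>W (Suc n). F a) = F [] + (\<Sum>a\<in>W n. F (X # a)) + (\<Sum>a\<in>W n. F (Y # a))"
proof -
  have d: "[] \<notin> Cons X ` W n \<union> Cons Y ` W n" by auto
  have d2: "Cons X ` W n \<inter> Cons Y ` W n = {}" by auto
  have "(\<Sum>a\<in>W (Suc n). F a) = F [] + (\<Sum>a\<in>Cons X ` W n \<union> Cons Y ` W n. F a)"
    unfolding W_Suc by (subst sum.insert) (use d in auto)
  also have "(\<Sum>a\<in>Cons X ` W n \<union> Cons Y ` W n. F a) = (\<Sum>a\<in>Cons X ` W n. F a) + (\<Sum>a\<in>Cons Y ` W n. F a)"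
    by (rule sum.union_disjoint) (use d2 in auto)
  also have "(\<Sum>a\<in>Cons X ` W n. F a) = (\<Sum>a\<in>W n. F (X # a))"
    by (subst sum.reindex) (auto simp: inj_on_def)
  also have "(\<Sum>a\<in>Cons Y ` W n. F a) = (\<Sum>a\<in>W n. F (Y # a))"
    by (subst sum.reindex) (auto simp: inj_on_def)
  finally show ?thesis by (simp add: add_ac)
qed

lemma sum_W_Suc_c: 
  assumes "F [] = 0" "\<And>a d. d \<noteq> c \<Longrightarrow> F (d # a) = 0"
  shows "(\<Sum>a\<in>W (Suc n). F a) = (\<Sum>a\<in>W n. F (c # a))"
  unfolding sum_W_Suc using assms by (cases c) auto

definition dl :: "letter \<Rightarrow> 'a vec \<Rightarrow> 'a vec" where
  "dl c f = (\<lambda>t. f (c # t))"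

definition Kc :: "'a::field \<Rightarrow> letter \<Rightarrow> 'a vec \<Rightarrow> 'a vec" where
  "Kc q c f = (\<lambda>a. q powi (\<Sum>l\<leftarrow>a. pairing l c) * f a)"

lemma star_Nil: "star q f g [] = f [] * g []"
proof -
  have "W 0 = {[]}" unfolding W_eq by auto
  then show ?thesis unfolding star_W by (simp add: word_apply)
qed

lemma star_Cons: "star q f g (c # t) = star q (dl c f) g t + star q (Kc q c f) (dl c g) t"
proof -
  let ?n = "length t"
  let ?T1 = "\<lambda>a b. (case a of [] \<Rightarrow> 0 | a0 # a' \<Rightarrow> if a0 = c then qsh q a' b t else 0)"
  let ?T2 = "\<lambda>a b. (case b of [] \<Rightarrow> 0 | b0 # b' \<Rightarrow> if b0 = c then qsh q a b' t * q powi (\<Sum>l\<leftarrow>a. pairing l c) else 0)"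
  have "star q f g (c # t) = (\<Sum>a\<in>W (Suc ?n). \<Sum>b\<in>W (Suc ?n). f a * g b * (?T1 a b + ?T2 a b))"
    unfolding star_W by (simp add: qsh_Cons_eq)
  also have "\<dots> = (\<Sum>a\<in>W (Suc ?n). \<Sum>b\<in>W (Suc ?n). f a * g b * ?T1 a b)
                 + (\<Sum>a\<in>W (Suc ?n). \<Sum>b\<in>W (Suc ?n). f a * g b * ?T2 a b)"
    by (simp add: distrib_left sum.distrib)
  also have "(\<Sum>a\<in>W (Suc ?n). \<Sum>b\<in>W (Suc ?n). f a * g b * ?T1 a b)
      = (\<Sum>a\<in>W ?n. \<Sum>b\<in>W (Suc ?n). f (c # a) * g b * qsh q a b t)"
    by (subst sum_W_Suc_c[where c = c]) auto
  also have "\<dots> = star q (dl c f) g t"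
    by (subst star_alt[where A = "W ?n" and B = "W (Suc ?n)", OF finite_W finite_W]) (auto simp: dl_def W_eq)
  also have "(\<Sum>a\<in>W (Suc ?n). \<Sum>b\<in>W (Suc ?n). f a * g b * ?T2 a b)
      = (\<Sum>a\<in>W (Suc ?n). \<Sum>b\<in>W ?n. f a * g (c # b) * (qsh q a b t * q powi (\<Sum>l\<leftarrow>a. pairing l c)))"
    apply (rule sum.cong[OF refl])
    by (subst sum_W_Suc_c[where c = c]) auto
  also have "\<dots> = star q (Kc q c f) (dl c g) t"
    by (subst star_alt[where A = "W (Suc ?n)" and B = "W ?n", OF finite_W finite_W]) 
       (auto simp: dl_def Kc_def W_eq intro!: sum.cong simp: algebra_simps)
  finally show ?thesis .
qed



lemma star_sum_left: "star q (\<lambda>a. \<Sum>i\<in>I. F i a) g w = (\<Sum>i\<in>I. star q (F i) g w)"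
proof -
  have "star q (\<lambda>a. \<Sum>i\<in>I. F i a) g w = (\<Sum>a\<in>W (length w). \<Sum>b\<in>W (length w). \<Sum>i\<in>I. F i a * g b * qsh q a b w)"
    unfolding star_W by (simp add: sum_distrib_right)
  also have "\<dots> = (\<Sum>a\<in>W (length w). \<Sum>i\<in>I. \<Sum>b\<in>W (length w). F i a * g b * qsh q a b w)"
    by (rule sum.cong[OF refl], rule sum.swap)
  also have "\<dots> = (\<Sum>i\<in>I. star q (F i) g w)"
    unfolding star_W by (rule sum.swap)
  finally show ?thesis .
qed

lemma star_sum_right: "star q f (\<lambda>b. \<Sum>i\<in>I. F i b) w = (\<Sum>i\<in>I. star q f (F i) w)"
proof -
  have "star q f (\<lambda>b. \<Sum>i\<in>I. F i b) w = (\<Sum>a\<in>W (length w). \<Sum>b\<in>W (length w). \<Sum>i\<in>I. f a * F i b * qsh q a b w)"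
    unfolding star_W by (simp add: sum_distrib_right sum_distrib_left)
  also have "\<dots> = (\<Sum>a\<in>W (length w). \<Sum>i\<in>I. \<Sum>b\<in>W (length w). f a * F i b * qsh q a b w)"
    by (rule sum.cong[OF refl], rule sum.swap)
  also have "\<dots> = (\<Sum>i\<in>I. star q f (F i) w)"
    unfolding star_W by (rule sum.swap)
  finally show ?thesis .
qed

lemma star_scale_left: "star q (\<lambda>a. k * f a) g w = k * star q f g w"
  unfolding star_W by (simp add: sum_distrib_left mult_ac)

lemma star_scale_right: "star q f (\<lambda>a. k * g a) w = k * star q f g w"
  unfolding star_W by (simp add: sum_distrib_left mult_ac)

lemma star_add_left: "star q (\<lambda>a. f a + f' a) g w = star q f g w + star q f' g w"
  unfolding star_W by (simp add: distrib_left distrib_right sum.distrib)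

lemma star_add_right: "star q f (\<lambda>a. g a + g' a) w = star q f g w + star q f g' w"
  unfolding star_W by (simp add: distrib_left distrib_right sum.distrib)

lemma star_diff_left: "star q (\<lambda>a. f a - f' a) g w = star q f g w - star q f' g w"
  unfolding star_W by (simp add: left_diff_distrib right_diff_distrib sum_subtractf)

lemma star_diff_right: "star q f (\<lambda>a. g a - g' a) w = star q f g w - star q f g' w"
  unfolding star_W by (simp add: left_diff_distrib right_diff_distrib sum_subtractf)

lemma star_zero_left[simp]: "star q (\<lambda>a. 0) g w = 0"
  unfolding star_W by simp

lemma star_zero_right[simp]: "star q f (\<lambda>a. 0) w = 0"
  unfolding star_W by simp

lemma star_cong: "(\<And>a. f a = f' a) \<Longrightarrow> (\<And>b. g b = g' b) \<Longrightarrow> star q f g w = star q f' g' w"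
proof -
  assume "\<And>a. f a = f' a" "\<And>b. g b = g' b"
  then have "f = f'" "g = g'" by auto
  then show ?thesis by simp
qed

lemma dl_word_Nil: "dl c (word []) = (\<lambda>a. 0)"
  by (auto simp: dl_def word_apply)

lemma Kc_word_Nil: "Kc q c (word []) = word []"
  by (auto simp: Kc_def word_apply)

lemma star_unit_left: "star q (word []) g w = g w"
proof (induction w arbitrary: g)
  case Nil
  then show ?case by (simp add: star_Nil word_apply)
next
  case (Cons c t)
  then show ?case by (simp add: star_Cons dl_word_Nil Kc_word_Nil) (simp add: dl_def)
qed

lemma star_unit_right: "star q f (word []) w = f w"
proof (induction w arbitrary: f)
  case Nil
  then show ?case by (simp add: star_Nil word_apply)
next
  case (Cons c t)
  then show ?case by (simp add: star_Cons dl_word_Nil) (simp add: dl_def)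
qed

lemma star_Cons_fun: "dl c (star q f g) = (\<lambda>t. star q (dl c f) g t + star q (Kc q c f) (dl c g) t)"
  by (simp add: dl_def star_Cons)

lemma Kc_Nil[simp]: "Kc q c f [] = f []"
  by (simp add: Kc_def)

lemma dl_Kc: "q \<noteq> 0 \<Longrightarrow> dl c' (Kc q c f) = (\<lambda>t. q powi pairing c' c * Kc q c (dl c' f) t)"
  by (simp add: dl_def Kc_def power_int_add fun_eq_iff)

lemma Kc_Kc: "Kc q c (Kc q c' f) = Kc q c' (Kc q c f)"
  by (simp add: Kc_def fun_eq_iff)

lemma Kc_star: assumes "q \<noteq> 0" shows "Kc q c (star q f g) w = star q (Kc q c f) (Kc q c g) w"
proof (induction w arbitrary: f g)
  case Nil
  then show ?case by (simp add: star_Nil)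
next
  case (Cons c' t)
  have "Kc q c (star q f g) (c' # t) = q powi pairing c' c * Kc q c (dl c' (star q f g)) t"
    using dl_Kc[OF assms, of c' c "star q f g"] by (simp add: dl_def fun_eq_iff)
  also have "Kc q c (dl c' (star q f g)) t = Kc q c (star q (dl c' f) g) t + Kc q c (star q (Kc q c' f) (dl c' g)) t"
    by (simp add: star_Cons_fun Kc_def distrib_left)
  also have "\<dots> = star q (Kc q c (dl c' f)) (Kc q c g) t + star q (Kc q c (Kc q c' f)) (Kc q c (dl c' g)) t"
    using Cons by simp
  also have "star q (Kc q c f) (Kc q c g) (c' # t) = 
      star q (\<lambda>t. q powi pairing c' c * Kc q c (dl c' f) t) (Kc q c g) t
    + star q (Kc q c' (Kc q c f)) (\<lambda>t. q powi pairing c' c * Kc q c (dl c' g) t) t"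
    by (simp add: star_Cons dl_Kc[OF assms])
  ultimately show ?case by (simp add: star_scale_left star_scale_right Kc_Kc distrib_left)
qed

lemma Kc_star_fun: "q \<noteq> 0 \<Longrightarrow> Kc q c (star q f g) = star q (Kc q c f) (Kc q c g)"
  using Kc_star by blast

lemma star_assoc: assumes "q \<noteq> 0" shows "star q (star q f g) h w = star q f (star q g h) w"
proof (induction w arbitrary: f g h)
  case Nil
  then show ?case by (simp add: star_Nil)
next
  case (Cons c t)
  have "star q (star q f g) h (c # t) = star q (dl c (star q f g)) h t + star q (Kc q c (star q f g)) (dl c h) t"
    by (rule star_Cons)
  also have "\<dots> = star q (star q (dl c f) g) h t + star q (star q (Kc q c f) (dl c g)) h t
       + star q (star q (Kc q c f) (Kc q c g)) (dl c h) t"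
    by (simp add: star_Cons_fun star_add_left Kc_star_fun[OF assms])
  also have "\<dots> = star q (dl c f) (star q g h) t + star q (Kc q c f) (star q (dl c g) h) t
       + star q (Kc q c f) (star q (Kc q c g) (dl c h)) t"
    using Cons by simp
  also have "\<dots> = star q f (star q g h) (c # t)"
    by (simp add: star_Cons star_Cons_fun star_add_right)
  finally show ?case .
qed



lemma qint_nat: "qint q (int n) = (q ^ n - inverse (q ^ n)) / (q - inverse q)"
  unfolding qint_def by (simp add: power_int_minus)

lemma qint_0[simp]: "qint q 0 = 0"
  unfolding qint_def by simp

lemma qint_1: "q - inverse q \<noteq> 0 \<Longrightarrow> qint q 1 = 1"
  unfolding qint_def by simp

lemma qint_add_nat: "qint q (int a + int b) = q ^ a * qint q (int b) + inverse (q ^ b) * qint q (int a)"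
proof -
  have num: "q^a*q^b - inverse(q^a*q^b) = q^a*(q^b - inverse(q^b)) + inverse(q^b)*(q^a - inverse(q^a))"
    by (simp add: algebra_simps inverse_mult_distrib)
  have "qint q (int (a+b)) = (q^a*(q^b - inverse(q^b)) + inverse(q^b)*(q^a - inverse(q^a)))/(q - inverse q)"
    by (simp only: qint_nat power_add num)
  also have "\<dots> = q^a * ((q^b - inverse(q^b))/(q - inverse q)) + inverse(q^b)*((q^a - inverse(q^a))/(q - inverse q))"
    by (simp only: add_divide_distrib times_divide_eq_right)
  finally show ?thesis by (simp only: qint_nat of_nat_add)
qed

definition cntX :: "letter list \<Rightarrow> nat" where "cntX w = length (filter (\<lambda>l. l = X) w)"
definition sc :: "'a::field \<Rightarrow> 'a vec \<Rightarrow> 'a vec" where "sc s f = (\<lambda>w. s ^ cntX w * f w)"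
definition Nf :: "'a::field vec \<Rightarrow> 'a vec" where "Nf f = (\<lambda>w. of_nat (cntX w) * f w)"
definition ht :: "letter list \<Rightarrow> int" where "ht w = (\<Sum>l\<leftarrow>w. bar l)"

lemma cntX_simps[simp]: "cntX [] = 0" "cntX (X # w) = Suc (cntX w)" "cntX (Y # w) = cntX w"
  by (auto simp: cntX_def)

lemma ht_simps[simp]: "ht [] = 0" "ht (X # w) = 1 + ht w" "ht (Y # w) = ht w - 1"
  by (auto simp: ht_def bar_def)

fun Ef :: "'a::field \<Rightarrow> nat \<Rightarrow> letter list \<Rightarrow> 'a" where
  "Ef q h [] = (if h = 0 then 1 else 0)"
| "Ef q h (X # w) = qint q (int h + 2) * Ef q (h + 1) w"
| "Ef q h (Y # w) = (if h = 0 then 0 else qint q (int h) * Ef q (h - 1) w)"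

fun Gf :: "'a::field \<Rightarrow> nat \<Rightarrow> letter list \<Rightarrow> 'a" where
  "Gf q j [] = 0"
| "Gf q j (X # w) = qint q (int j + 1) * Gf q (j + 1) w"
| "Gf q j (Y # w) = (if j = 0 then 0 else if j = 1 then (if w = [] then 1 else 0)
                      else qint q (int j - 1) * Gf q (j - 1) w)"

lemma pairing_sum: "(\<Sum>l\<leftarrow>a. pairing l c) = 2 * bar c * ht a"
proof (induction a)
  case Nil then show ?case by simp
next
  case (Cons l a)
  then show ?case by (cases l; cases c) (auto simp: pairing_def bar_def algebra_simps)
qed

lemma Ef_supp: "Ef q h w \<noteq> 0 \<Longrightarrow> ht w = - int h"
proof (induction w arbitrary: h)
  case Nil then show ?case by (simp split: if_splits)
next
  case (Cons l w)
  then show ?case by (cases l) (auto split: if_splits)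
qed

lemma Gf_supp: "Gf q j w \<noteq> 0 \<Longrightarrow> ht w = - int j"
proof (induction w arbitrary: j)
  case Nil then show ?case by simp
next
  case (Cons l w)
  then show ?case by (cases l) (auto split: if_splits)
qed

lemma powi_2h: "(q::'a::field) powi (2 * int h) = q ^ (2 * h)"
proof -
  have e: "(2::int) * int h = int (2*h)" by simp
  show ?thesis by (simp only: e power_int_of_nat)
qed

lemma powi_m2h: "(q::'a::field) powi (- (2 * int h)) = inverse (q ^ (2 * h))"
proof -
  have e: "(2::int) * int h = int (2*h)" by simp
  show ?thesis by (simp only: e power_int_of_nat power_int_minus)
qed

lemma Kc_supp: 
  assumes "\<And>a. f a \<noteq> 0 \<Longrightarrow> ht a = - int h"
  shows "Kc q X f = (\<lambda>a. inverse (q ^ (2 * h)) * f a)" "Kc q Y f = (\<lambda>a. q ^ (2 * h) * f a)"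
proof -
  show "Kc q X f = (\<lambda>a. inverse (q ^ (2 * h)) * f a)"
  proof
    fix a show "Kc q X f a = inverse (q ^ (2 * h)) * f a"
      proof (cases "f a = 0")
        case False
        have e: "(2::int) * (- int h) = - int (2*h)" by simp
        show ?thesis using assms[OF False] by (simp add: Kc_def pairing_sum bar_def powi_m2h powi_2h)
      qed (simp add: Kc_def)
  qed
  show "Kc q Y f = (\<lambda>a. q ^ (2 * h) * f a)"
  proof
    fix a show "Kc q Y f a = q ^ (2 * h) * f a"
      proof (cases "f a = 0")
        case False
        have e: "(2::int) * int h = int (2*h)" by simp
        show ?thesis using assms[OF False] by (simp add: Kc_def pairing_sum bar_def powi_2h)
      qed (simp add: Kc_def)
  qed
qed

lemma sc_supp: "(\<And>a. f a \<noteq> 0 \<Longrightarrow> P a) \<Longrightarrow> sc s f a \<noteq> 0 \<Longrightarrow> P a"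
  unfolding sc_def by auto

lemma Kc_Ef: "Kc q X (Ef q h) = (\<lambda>a. inverse (q ^ (2 * h)) * Ef q h a)" "Kc q Y (Ef q h) = (\<lambda>a. q ^ (2 * h) * Ef q h a)"
proof -
  have "\<And>a. Ef q h a \<noteq> 0 \<Longrightarrow> ht a = - int h" using Ef_supp by blast
  then show "Kc q X (Ef q h) = (\<lambda>a. inverse (q ^ (2 * h)) * Ef q h a)" "Kc q Y (Ef q h) = (\<lambda>a. q ^ (2 * h) * Ef q h a)"
    using Kc_supp[of "Ef q h" h q] by auto
qed

lemma Kc_scG: "Kc q X (sc s (Gf q j)) = (\<lambda>a. inverse (q ^ (2 * j)) * sc s (Gf q j) a)" "Kc q Y (sc s (Gf q j)) = (\<lambda>a. q ^ (2 * j) * sc s (Gf q j) a)"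
proof -
  have "\<And>a. sc s (Gf q j) a \<noteq> 0 \<Longrightarrow> ht a = - int j" using Gf_supp unfolding sc_def by fastforce
  then show "Kc q X (sc s (Gf q j)) = (\<lambda>a. inverse (q ^ (2 * j)) * sc s (Gf q j) a)" "Kc q Y (sc s (Gf q j)) = (\<lambda>a. q ^ (2 * j) * sc s (Gf q j) a)"
    using Kc_supp[of "sc s (Gf q j)" j q] by auto
qed

lemma dl_Ef: "dl X (Ef q h) = (\<lambda>t. qint q (int h + 2) * Ef q (h + 1) t)"
  "dl Y (Ef q h) = (\<lambda>t. qint q (int h) * Ef q (h - 1) t)"
  by (auto simp: dl_def)

lemma dl_scG_X: "dl X (sc s (Gf q j)) = (\<lambda>t. (s * qint q (int j + 1)) * sc s (Gf q (j + 1)) t)"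
  by (auto simp: dl_def sc_def)

lemma dl_scG_Y1: "dl Y (sc s (Gf q 1)) = word []"
  by (auto simp: dl_def sc_def word_apply)

lemma dl_scG_Y1': "dl Y (sc s (Gf q (Suc 0))) = word []"
  by (auto simp: dl_def sc_def word_apply)

lemma dl_scG_Y0: "dl Y (sc s (Gf q 0)) = (\<lambda>t. 0)"
  by (auto simp: dl_def sc_def)

lemma dl_scG_Y2: "dl Y (sc s (Gf q (Suc (Suc j)))) = (\<lambda>t. qint q (int j + 1) * sc s (Gf q (Suc j)) t)"
  by (auto simp: dl_def sc_def algebra_simps)



lemma qint_1': "q - inverse q \<noteq> 0 \<Longrightarrow> qint q (int (Suc 0)) = 1"
  using qint_1[of q] by simp

lemma Ef_Nil_pos: "0 < h \<Longrightarrow> Ef q h [] = 0" by simp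

lemma scal_FpX: fixes q P A B Qj Qj1 Qh2 E :: "'a::field" assumes "Qj \<noteq> 0" "Qj1 \<noteq> 0" "B \<noteq> 0"
  shows "(q^2 * Qj1) * (P*A/Qj1 * E) + inverse(B*B) * (Qh2 * (P*B/Qj * E)) = P/Qj * ((A*q*q*Qj + inverse B * Qh2) * E)"
  using assms by (simp add: field_simps power2_eq_square)

lemma scal_FpY: fixes q M A B Qj Qj1 Qh E :: "'a::field" assumes "Qj \<noteq> 0" "Qj1 \<noteq> 0" "A \<noteq> 0" "q \<noteq> 0"
  shows "Qj1 * (M * B / Qj1 * E) + (B * q * (B * q)) * (Qh * (M * A / Qj * E))
     = M * B * A * q / Qj * ((B * q * Qh + inverse (A * q) * Qj) * E)"
  using assms by (simp add: field_simps)

lemma Fp: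
  fixes q :: "'a::field"
  assumes q: "q \<noteq> 0" and qnz: "\<And>k. k > 0 \<Longrightarrow> qint q (int k) \<noteq> 0" and d: "q - inverse q \<noteq> 0"
  shows "1 \<le> j \<Longrightarrow> star q (sc (q^2) (Gf q j)) (Ef q h) w = q^(j*h) / qint q (int j) * Ef q (h+j) w"
proof (induction w arbitrary: j h)
  case Nil
  then show ?case by (simp add: star_Nil sc_def)
next
  case (Cons c t)
  show ?case
  proof (cases c)
    case X
    have qj: "qint q (int j) \<noteq> 0" using Cons.prems qnz by simp
    have qj1: "qint q (int j + 1) \<noteq> 0" using qnz[of "j+1"] by (simp add: add.commute)
    have "star q (sc (q^2) (Gf q j)) (Ef q h) (X#t) = (q^2 * qint q (int j + 1)) * star q (sc (q^2) (Gf q (j+1))) (Ef q h) t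
        + inverse (q^(2*j)) * (qint q (int h + 2) * star q (sc (q^2) (Gf q j)) (Ef q (h+1)) t)"
      by (simp add: star_Cons dl_scG_X Kc_scG dl_Ef star_scale_left star_scale_right)
    also have "\<dots> = (q^2 * qint q (int j + 1)) * (q^((j+1)*h) / qint q (int (j+1)) * Ef q (h+j+1) t)
        + inverse (q^(2*j)) * (qint q (int h + 2) * (q^(j*(h+1)) / qint q (int j) * Ef q (h+1+j) t))"
      using Cons.IH Cons.prems by simp
    also have "\<dots> = q^(j*h) / qint q (int j) * Ef q (h+j) (X#t)"
    proof -
      have s: "qint q (int (h+j) + 2) = q^h * q * q * qint q (int j) + inverse (q^j) * qint q (int h + 2)"
        using qint_add_nat[of q "h+2" j] by (simp add: power_add algebra_simps power2_eq_square)
      have p1: "q^((j+1)*h) = q^(j*h) * q^h" "q^(j*(h+1)) = q^(j*h) * q^j" "q^(2*j) = q^j * q^j"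
        by (simp_all add: power_add algebra_simps power_mult power2_eq_square)
      have e: "h+1+j = h+j+1" "int (j+1) = int j + 1" by simp_all
      show ?thesis unfolding p1 e Ef.simps s
        by (rule scal_FpX) (use qj qj1 q in auto)
    qed
    finally show ?thesis using X by simp
  next
    case Y
    show ?thesis
    proof (cases "j = 1")
      case True
      show ?thesis
      proof (cases h)
        case 0
        have "star q (sc (q^2) (Gf q j)) (Ef q h) (Y#t) = Ef q 0 t"
          using True 0 by (simp add: star_Cons dl_scG_Y1 dl_scG_Y1' Kc_scG dl_Ef star_scale_left star_scale_right star_unit_left)
        then show ?thesis using True 0 Y d qint_1[of q] by simp
      next
        case (Suc h')
        have "star q (sc (q^2) (Gf q j)) (Ef q h) (Y#t) = Ef q h t + q^2 * (qint q (int h) * star q (sc (q^2) (Gf q 1)) (Ef q h') t)"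
          using True Suc by (simp add: star_Cons dl_scG_Y1 dl_scG_Y1' Kc_scG dl_Ef star_scale_left star_scale_right star_unit_left)
        also have "\<dots> = Ef q h t + q^2 * (qint q (int h) * (q^h' * Ef q h t))"
          using Cons.IH[of 1 h'] Suc d qint_1[of q] by simp
        also have "\<dots> = q^(j*h) / qint q (int j) * Ef q (h+j) (Y#t)"
        proof -
          have s: "qint q (int h + 1) = q * qint q (int h) + inverse (q^h)"
            using qint_add_nat[of q 1 h] d qint_1[of q] by (simp add: algebra_simps)
          have s2: "qint q (int h' + 2) = q * qint q (1 + int h') + inverse (q ^ Suc h')"
            using qint_add_nat[of q 1 "Suc h'"] qint_1[of q] d by (simp add: algebra_simps)
          show ?thesis using True Suc d q qint_1[of q] by (simp add: s2 field_simps power2_eq_square)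
        qed
        finally show ?thesis using Y by simp
      qed
    next
      case False
      then obtain j' where j': "j = Suc (Suc j')" using Cons.prems by (cases j; cases "j - 1") auto
      have qj: "qint q (int j) \<noteq> 0" using Cons.prems qnz by simp
      have qj1: "qint q (int j' + 1) \<noteq> 0" using qnz[of "j'+1"] by (simp add: add.commute)
      show ?thesis
      proof (cases h)
        case 0
        have "star q (sc (q^2) (Gf q j)) (Ef q h) (Y#t) = qint q (int j' + 1) * star q (sc (q^2) (Gf q (Suc j'))) (Ef q 0) t"
          using j' 0 by (simp add: star_Cons dl_scG_Y2 Kc_scG dl_Ef star_scale_left star_scale_right)
        also have "\<dots> = Ef q (Suc j') t"
          using Cons.IH[of "Suc j'" 0] qj1 by (simp add: add.commute)
        finally show ?thesis using j' 0 Y qj by simp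
      next
        case (Suc h')
        have "star q (sc (q^2) (Gf q j)) (Ef q h) (Y#t) = qint q (int j' + 1) * star q (sc (q^2) (Gf q (Suc j'))) (Ef q h) t
           + q^(2*j) * (qint q (int h) * star q (sc (q^2) (Gf q j)) (Ef q h') t)"
          using j' Suc by (simp add: star_Cons dl_scG_Y2 Kc_scG dl_Ef star_scale_left star_scale_right)
        also have "\<dots> = qint q (int j' + 1) * (q^(Suc j' * h) / qint q (int (Suc j')) * Ef q (h + Suc j') t)
           + q^(2*j) * (qint q (int h) * (q^(j*h') / qint q (int j) * Ef q (h'+j) t))"
          using Cons.IH[of "Suc j'" h] Cons.IH[of j h'] j' by simp
        also have "\<dots> = q^(j*h) / qint q (int j) * Ef q (h+j) (Y#t)"
        proof -
          define M where "M = q^(Suc j' * h')"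
          have p: "q^(Suc j' * h) = M * q^(Suc j')" "q^(j*h') = M * q^h'" "q^(2*j) = (q^(Suc j') * q) * (q^(Suc j') * q)"
                  "q^(j*h) = M * q^(Suc j') * q^h' * q"
            unfolding M_def using j' Suc by (simp_all add: power_add algebra_simps power_mult power2_eq_square)
          have s: "qint q (int (h+j)) = (q^(Suc j') * q) * qint q (int h) + inverse (q^h' * q) * qint q (int j)"
            using qint_add_nat[of q j h] j' Suc by (simp add: algebra_simps)
          have e: "h + Suc j' = h' + j" "h' + j = h + j - 1" "int (Suc j') = int j' + 1" using j' Suc by simp_all
          have ef: "Ef q (h+j) (Y#t) = qint q (int (h+j)) * Ef q (h'+j) t" using j' Suc by simp
          show ?thesis unfolding p ef s e(1) e(3)
            by (rule scal_FpY) (use qj qj1 q in auto)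
        qed
        finally show ?thesis using Y by simp
      qed
    qed
  qed
qed



lemma scal_FmX: fixes q P A B Qj Qj1 Qh2 E :: "'a::field" assumes "Qj \<noteq> 0" "Qj1 \<noteq> 0" "A \<noteq> 0" "q \<noteq> 0"
  shows "Qh2 * (P*B/Qj*E) + inverse(A*A) * ((inverse(q^2) * Qj1) * (P*A/Qj1*E)) = P/Qj * ((B*Qh2 + inverse(A*q*q)*Qj)*E)"
  using assms by (simp add: field_simps power2_eq_square)

lemma scal_FmY: fixes q M A B Qj Qj1 Qh E :: "'a::field" assumes "Qj \<noteq> 0" "Qj1 \<noteq> 0" "B \<noteq> 0" "q \<noteq> 0"
  shows "Qh * (M * A / Qj * E) + (A * q * (A * q)) * (Qj1 * (M * B / Qj1 * E))
     = M * B * A * q / Qj * ((A * q * Qj + inverse (B * q) * Qh) * E)"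
  using assms by (simp add: field_simps)

lemma Fm:
  fixes q :: "'a::field"
  assumes q: "q \<noteq> 0" and qnz: "\<And>k. k > 0 \<Longrightarrow> qint q (int k) \<noteq> 0" and d: "q - inverse q \<noteq> 0"
  shows "1 \<le> j \<Longrightarrow> star q (Ef q h) (sc (inverse (q^2)) (Gf q j)) w = q^(j*h) / qint q (int j) * Ef q (h+j) w"
proof (induction w arbitrary: j h)
  case Nil
  then show ?case by (simp add: star_Nil sc_def)
next
  case (Cons c t)
  show ?case
  proof (cases c)
    case X
    have qj: "qint q (int j) \<noteq> 0" using Cons.prems qnz by simp
    have qj1: "qint q (int j + 1) \<noteq> 0" using qnz[of "j+1"] by (simp add: add.commute)
    have "star q (Ef q h) (sc (inverse (q^2)) (Gf q j)) (X#t) = qint q (int h + 2) * star q (Ef q (h+1)) (sc (inverse (q^2)) (Gf q j)) t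
        + inverse (q^(2*h)) * ((inverse (q^2) * qint q (int j + 1)) * star q (Ef q h) (sc (inverse (q^2)) (Gf q (j+1))) t)"
      by (simp add: star_Cons dl_scG_X Kc_Ef dl_Ef star_scale_left star_scale_right)
    also have "\<dots> = qint q (int h + 2) * (q^(j*(h+1)) / qint q (int j) * Ef q (h+1+j) t)
        + inverse (q^(2*h)) * ((inverse (q^2) * qint q (int j + 1)) * (q^((j+1)*h) / qint q (int (j+1)) * Ef q (h+(j+1)) t))"
      using Cons.IH Cons.prems by simp
    also have "\<dots> = q^(j*h) / qint q (int j) * Ef q (h+j) (X#t)"
    proof -
      have s: "qint q (int (h+j) + 2) = q^j * qint q (int h + 2) + inverse (q^h * q * q) * qint q (int j)"
        using qint_add_nat[of q j "h+2"] by (simp add: power_add algebra_simps power2_eq_square)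
      have p1: "q^((j+1)*h) = q^(j*h) * q^h" "q^(j*(h+1)) = q^(j*h) * q^j" "q^(2*h) = q^h * q^h"
        by (simp_all add: power_add algebra_simps power_mult power2_eq_square)
      have e: "h+1+j = h+j+1" "h+(j+1) = h+j+1" "int (j+1) = int j + 1" by simp_all
      show ?thesis unfolding p1 e Ef.simps s
        by (rule scal_FmX) (use qj qj1 q in auto)
    qed
    finally show ?thesis using X by simp
  next
    case Y
    show ?thesis
    proof (cases "j = 1")
      case True
      show ?thesis
      proof (cases h)
        case 0
        have "star q (Ef q h) (sc (inverse (q^2)) (Gf q j)) (Y#t) = Ef q 0 t"
          using True 0 by (simp add: star_Cons dl_scG_Y1 dl_scG_Y1' Kc_Ef dl_Ef star_scale_left star_scale_right star_unit_right)
        then show ?thesis using True 0 Y d qint_1[of q] by simp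
      next
        case (Suc h')
        have "star q (Ef q h) (sc (inverse (q^2)) (Gf q j)) (Y#t) = qint q (int h) * star q (Ef q h') (sc (inverse (q^2)) (Gf q 1)) t + q^(2*h) * Ef q h t"
          using True Suc by (simp add: star_Cons dl_scG_Y1 dl_scG_Y1' Kc_Ef dl_Ef star_scale_left star_scale_right star_unit_right)
        also have "\<dots> = qint q (int h) * (q^h' * Ef q h t) + q^(2*h) * Ef q h t"
          using Cons.IH[of 1 h'] Suc d qint_1[of q] by simp
        also have "\<dots> = q^(j*h) / qint q (int j) * Ef q (h+j) (Y#t)"
        proof -
          have s2: "qint q (int (Suc h') + 1) = q ^ Suc h' + inverse q * qint q (int (Suc h'))"
            using qint_add_nat[of q "Suc h'" 1] qint_1[of q] d by (simp add: algebra_simps)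
          have p: "q^(2*h) = q^h' * q * (q^h' * q)" using Suc by (simp add: power_add algebra_simps power_mult power2_eq_square)
          have ef: "Ef q (h+j) (Y#t) = qint q (int (Suc h') + 1) * Ef q h t" using True Suc by simp
          show ?thesis unfolding p ef s2 using True Suc d q qint_1[of q] by (simp add: field_simps)
        qed
        finally show ?thesis using Y by simp
      qed
    next
      case False
      then obtain j' where j': "j = Suc (Suc j')" using Cons.prems by (cases j; cases "j - 1") auto
      have qj: "qint q (int j) \<noteq> 0" using Cons.prems qnz by simp
      have qj1: "qint q (int j' + 1) \<noteq> 0" using qnz[of "j'+1"] by (simp add: add.commute)
      show ?thesis
      proof (cases h)
        case 0
        have "star q (Ef q h) (sc (inverse (q^2)) (Gf q j)) (Y#t) = qint q (int j' + 1) * star q (Ef q 0) (sc (inverse (q^2)) (Gf q (Suc j'))) t"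
          using j' 0 by (simp add: star_Cons dl_scG_Y2 Kc_Ef dl_Ef star_scale_left star_scale_right)
        also have "\<dots> = Ef q (Suc j') t"
          using Cons.IH[of "Suc j'" 0] qj1 by (simp add: add.commute)
        finally show ?thesis using j' 0 Y qj by simp
      next
        case (Suc h')
        have "star q (Ef q h) (sc (inverse (q^2)) (Gf q j)) (Y#t) = qint q (int h) * star q (Ef q h') (sc (inverse (q^2)) (Gf q j)) t
           + q^(2*h) * (qint q (int j' + 1) * star q (Ef q h) (sc (inverse (q^2)) (Gf q (Suc j'))) t)"
          using j' Suc by (simp add: star_Cons dl_scG_Y2 Kc_Ef dl_Ef star_scale_left star_scale_right)
        also have "\<dots> = qint q (int h) * (q^(j*h') / qint q (int j) * Ef q (h'+j) t)
           + q^(2*h) * (qint q (int j' + 1) * (q^(Suc j' * h) / qint q (int (Suc j')) * Ef q (h + Suc j') t))"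
          using Cons.IH[of "Suc j'" h] Cons.IH[of j h'] j' by simp
        also have "\<dots> = q^(j*h) / qint q (int j) * Ef q (h+j) (Y#t)"
        proof -
          define M where "M = q^(Suc j' * h')"
          have p: "q^(Suc j' * h) = M * q^(Suc j')" "q^(j*h') = M * q^h'" "q^(2*h) = (q^h' * q) * (q^h' * q)"
                  "q^(j*h) = M * q^(Suc j') * q^h' * q"
            unfolding M_def using j' Suc by (simp_all add: power_add algebra_simps power_mult power2_eq_square)
          have s: "qint q (int (h+j)) = (q^h' * q) * qint q (int j) + inverse (q^(Suc j') * q) * qint q (int h)"
            using qint_add_nat[of q h j] j' Suc by (simp add: algebra_simps)
          have e: "h + Suc j' = h' + j" "int (Suc j') = int j' + 1" using j' Suc by simp_all
          have ef: "Ef q (h+j) (Y#t) = qint q (int (h+j)) * Ef q (h'+j) t" using j' Suc by simp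
          show ?thesis unfolding p ef s e(1) e(2)
            by (rule scal_FmY) (use qj qj1 q in auto)
        qed
        finally show ?thesis using Y by simp
      qed
    qed
  qed
qed



lemma scal_ZX: fixes dd n E Q SA SB A q :: "'a::field"
  assumes "dd*(n*E) = SA - SB" "dd*Q = A*q*q - inverse(A*q*q)" "A \<noteq> 0" "q \<noteq> 0"
  shows "dd * ((n+1)*(Q*E)) = (q^2*(A*E) + Q*SA) - (Q*SB + inverse(A*A)*(inverse(q^2)*(A*E)))"
proof -
  have "dd * ((n+1)*(Q*E)) = Q*(dd*(n*E)) + (dd*Q)*E" by (simp add: algebra_simps)
  also have "\<dots> = Q*(SA - SB) + (A*q*q - inverse(A*q*q))*E" using assms by simp
  also have "\<dots> = (q^2*(A*E) + Q*SA) - (Q*SB + inverse(A*A)*(inverse(q^2)*(A*E)))"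
    using assms(3,4) by (simp add: field_simps power2_eq_square)
  finally show ?thesis .
qed

lemma Zid:
  fixes q :: "'a::field"
  assumes q: "q \<noteq> 0" and qnz: "\<And>k. k > 0 \<Longrightarrow> qint q (int k) \<noteq> 0" and d: "q - inverse q \<noteq> 0"
  shows "(q - inverse q) * (of_nat (cntX w) * Ef q h w)
     = star q (sc (q^2) (Gf q 0)) (Ef q h) w - star q (Ef q h) (sc (inverse (q^2)) (Gf q 0)) w"
proof (induction w arbitrary: h)
  case Nil
  then show ?case by (simp add: star_Nil sc_def)
next
  case (Cons c t)
  have q1: "qint q 1 = 1" using qint_1[OF d] .
  show ?case
  proof (cases c)
    case X
    have "star q (sc (q^2) (Gf q 0)) (Ef q h) (X#t) = (q^2 * qint q 1) * star q (sc (q^2) (Gf q 1)) (Ef q h) t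
          + qint q (int h + 2) * star q (sc (q^2) (Gf q 0)) (Ef q (h+1)) t"
      by (simp add: star_Cons dl_scG_X Kc_scG dl_Ef star_scale_left star_scale_right)
    also have "\<dots> = q^2 * (q^h * Ef q (h+1) t) + qint q (int h + 2) * star q (sc (q^2) (Gf q 0)) (Ef q (h+1)) t"
      using Fp[OF q qnz d, of 1 h t] q1 by simp
    finally have A: "star q (sc (q^2) (Gf q 0)) (Ef q h) (X#t) = q^2 * (q^h * Ef q (h+1) t) + qint q (int h + 2) * star q (sc (q^2) (Gf q 0)) (Ef q (h+1)) t" .
    have "star q (Ef q h) (sc (inverse (q^2)) (Gf q 0)) (X#t) = qint q (int h + 2) * star q (Ef q (h+1)) (sc (inverse (q^2)) (Gf q 0)) t
          + inverse (q^(2*h)) * ((inverse (q^2) * qint q 1) * star q (Ef q h) (sc (inverse (q^2)) (Gf q 1)) t)"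
      by (simp add: star_Cons dl_scG_X Kc_Ef dl_Ef star_scale_left star_scale_right)
    also have "\<dots> = qint q (int h + 2) * star q (Ef q (h+1)) (sc (inverse (q^2)) (Gf q 0)) t
          + inverse (q^(2*h)) * (inverse (q^2) * (q^h * Ef q (h+1) t))"
      using Fm[OF q qnz d, of 1 h t] q1 by simp
    finally have B: "star q (Ef q h) (sc (inverse (q^2)) (Gf q 0)) (X#t) = qint q (int h + 2) * star q (Ef q (h+1)) (sc (inverse (q^2)) (Gf q 0)) t
          + inverse (q^(2*h)) * (inverse (q^2) * (q^h * Ef q (h+1) t))" .
    have IH: "(q - inverse q) * (of_nat (cntX t) * Ef q (h+1) t)
     = star q (sc (q^2) (Gf q 0)) (Ef q (h+1)) t - star q (Ef q (h+1)) (sc (inverse (q^2)) (Gf q 0)) t"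
      by (rule Cons.IH)
    have s: "(q - inverse q) * qint q (int h + 2) = q^h * q * q - inverse (q^h * q * q)"
      using qint_nat[of q "h+2"] d by (simp add: field_simps power_add power2_eq_square add.commute)
    have p: "q^(2*h) = q^h * q^h" by (simp add: power_add algebra_simps power_mult power2_eq_square)
    have c: "of_nat (cntX (X#t)) = of_nat (cntX t) + (1::'a)" by simp
    have ef: "Ef q h (X#t) = qint q (int h + 2) * Ef q (h+1) t" by simp
    show ?thesis unfolding A B X c ef p
      by (rule scal_ZX[OF IH s]) (use q in auto)
  next
    case Y
    have A: "star q (sc (q^2) (Gf q 0)) (Ef q h) (Y#t) = qint q (int h) * star q (sc (q^2) (Gf q 0)) (Ef q (h-1)) t"
      by (simp add: star_Cons dl_scG_Y0 Kc_scG dl_Ef star_scale_left star_scale_right)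
    have B: "star q (Ef q h) (sc (inverse (q^2)) (Gf q 0)) (Y#t) = qint q (int h) * star q (Ef q (h-1)) (sc (inverse (q^2)) (Gf q 0)) t"
      by (simp add: star_Cons dl_scG_Y0 Kc_Ef dl_Ef star_scale_left star_scale_right)
    have ef: "Ef q h (Y#t) = qint q (int h) * Ef q (h-1) t" using dl_Ef(2)[of q h] unfolding dl_def by metis
    have "qint q (int h) * star q (sc (q^2) (Gf q 0)) (Ef q (h-1)) t - qint q (int h) * star q (Ef q (h-1)) (sc (inverse (q^2)) (Gf q 0)) t
      = qint q (int h) * ((q - inverse q) * (of_nat (cntX t) * Ef q (h-1) t))"
      using Cons.IH[of "h-1"] by (simp add: right_diff_distrib)
    then show ?thesis unfolding A B Y ef by (simp add: mult_ac)
  qed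
qed



lemma ht_Cons: "ht (l # w) = bar l + ht w"
  by (simp add: ht_def)

definition Rf :: "'a::field \<Rightarrow> int \<Rightarrow> letter list \<Rightarrow> 'a" where
  "Rf q h w = (if (\<forall>i \<le> length w. 0 \<le> h + ht (take i w)) \<and> h + ht w = 0
     then (\<Prod>i\<in>{1..length w}. qint q (1 + h + ht (take i w))) else 0)"

lemma Rf_Cons: assumes h0: "0 \<le> h" shows "Rf q h (l # w) = (if 0 \<le> h + bar l then qint q (1 + h + bar l) * Rf q (h + bar l) w else 0)"
proof -
  have prod: "(\<Prod>i\<in>{1..length (l#w)}. qint q (1 + h + ht (take i (l#w))))
      = qint q (1 + h + bar l) * (\<Prod>i\<in>{1..length w}. qint q (1 + (h + bar l) + ht (take i w)))"
  proof -
    have "(\<Prod>i\<in>{1..Suc (length w)}. qint q (1 + h + ht (take i (l#w))))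
       = qint q (1 + h + ht (take 1 (l#w))) * (\<Prod>i\<in>{Suc 1..Suc (length w)}. qint q (1 + h + ht (take i (l#w))))"
      by (subst prod.atLeast_Suc_atMost) auto
    also have "(\<Prod>i\<in>{Suc 1..Suc (length w)}. qint q (1 + h + ht (take i (l#w))))
        = (\<Prod>i\<in>{1..length w}. qint q (1 + h + ht (take (Suc i) (l#w))))"
      by (subst prod.shift_bounds_cl_Suc_ivl) simp
    finally show ?thesis by (simp add: ht_Cons algebra_simps)
  qed
  have cond: "(\<forall>i \<le> length (l#w). 0 \<le> h + ht (take i (l#w))) \<longleftrightarrow>
     0 \<le> h + bar l \<and> (\<forall>i \<le> length w. 0 \<le> (h + bar l) + ht (take i w))"
  proof
    assume a: "\<forall>i \<le> length (l#w). 0 \<le> h + ht (take i (l#w))"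
    show "0 \<le> h + bar l \<and> (\<forall>i \<le> length w. 0 \<le> (h + bar l) + ht (take i w))"
    proof (intro conjI allI impI)
      show "0 \<le> h + bar l" using a[rule_format, of 1] by (simp add: ht_Cons)
      fix i assume "i \<le> length w"
      then show "0 \<le> (h + bar l) + ht (take i w)" using a[rule_format, of "Suc i"] by (simp add: ht_Cons algebra_simps)
    qed
  next
    assume a: "0 \<le> h + bar l \<and> (\<forall>i \<le> length w. 0 \<le> (h + bar l) + ht (take i w))"
    show "\<forall>i \<le> length (l#w). 0 \<le> h + ht (take i (l#w))"
    proof (intro allI impI)
      fix i assume i: "i \<le> length (l#w)"
      show "0 \<le> h + ht (take i (l#w))"
      proof (cases i)
        case 0 then show ?thesis using a h0 by simp
      next
        case (Suc i') then show ?thesis using a i by (simp add: ht_Cons algebra_simps)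
      qed
    qed
  qed
  have endc: "h + ht (l#w) = (h + bar l) + ht w" by (simp add: ht_Cons)
  show ?thesis unfolding Rf_def cond endc prod by auto
qed

lemma Ef_Rf: "Ef q h w = Rf q (int h) w"
proof (induction w arbitrary: h)
  case Nil
  then show ?case by (simp add: Rf_def)
next
  case (Cons l w)
  show ?case
  proof (cases l)
    case X
    then show ?thesis using Cons.IH[of "h+1"] by (simp add: Rf_Cons bar_def add.commute add.left_commute)
  next
    case Y
    show ?thesis
    proof (cases h)
      case 0
      then show ?thesis using Y by (simp add: Rf_Cons bar_def)
    next
      case (Suc h')
      then show ?thesis using Y Cons.IH[of h'] by (simp add: Rf_Cons bar_def)
    qed
  qed
qed



definition pj :: "nat \<Rightarrow> 'a::field vec \<Rightarrow> 'a vec" where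
  "pj n f = (\<lambda>w. if cntX w = n then f w else 0)"

lemma len_cnt: "int (length w) = 2 * int (cntX w) - ht w"
proof (induction w)
  case Nil then show ?case by simp
next
  case (Cons l w) then show ?case by (cases l) auto
qed

lemma sum_bar_ht: "(\<Sum>l\<leftarrow>u. bar l) = ht u" by (simp add: ht_def)

lemma Cn_pj: assumes d: "q - inverse q \<noteq> 0" shows "Cn q n w = pj n (Ef q 0) w"
proof -
  have cond: "(length w = 2 * n \<and> catalan w) \<longleftrightarrow> (cntX w = n \<and> ((\<forall>i \<le> length w. 0 \<le> ht (take i w)) \<and> ht w = 0))"
  proof
    assume a: "length w = 2 * n \<and> catalan w"
    then have h0: "ht w = 0" by (simp add: catalan_def sum_bar_ht)
    have "cntX w = n" using len_cnt[of w] a h0 by simp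
    moreover have "\<forall>i \<le> length w. 0 \<le> ht (take i w)"
    proof (intro allI impI)
      fix i assume i: "i \<le> length w"
      consider "i = 0" | "i = length w" | "1 \<le> i \<and> i \<le> length w - 1" using i by linarith
      then show "0 \<le> ht (take i w)"
        by cases (use a h0 in \<open>auto simp: catalan_def sum_bar_ht\<close>)
    qed
    ultimately show "cntX w = n \<and> ((\<forall>i \<le> length w. 0 \<le> ht (take i w)) \<and> ht w = 0)" using h0 by simp
  next
    assume a: "cntX w = n \<and> ((\<forall>i \<le> length w. 0 \<le> ht (take i w)) \<and> ht w = 0)"
    then have "length w = 2 * n" using len_cnt[of w] by simp
    moreover have "catalan w" unfolding catalan_def sum_bar_ht using a by auto
    ultimately show "length w = 2 * n \<and> catalan w" by simp
  qed
  have prod: "length w = 2 * n \<Longrightarrow> (\<Prod>i\<le>2 * n. qint q (1 + (\<Sum>l\<leftarrow>take i w. bar l)))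
      = (\<Prod>i\<in>{1..length w}. qint q (1 + int 0 + ht (take i w)))"
  proof -
    assume l: "length w = 2 * n"
    have "{..2*n} = insert 0 {1..2*n}" by auto
    then have "(\<Prod>i\<le>2 * n. qint q (1 + (\<Sum>l\<leftarrow>take i w. bar l))) = qint q 1 * (\<Prod>i\<in>{1..2*n}. qint q (1 + ht (take i w)))"
      by (simp add: sum_bar_ht)
    then show ?thesis using l qint_1[OF d] by simp
  qed
  show ?thesis unfolding Cn_def pj_def Ef_Rf Rf_def using cond prod by auto
qed



lemma cntX_append: "cntX (a @ b) = cntX a + cntX b" by (simp add: cntX_def)

lemma cat_X: "cat (word [X]) g w = (if w \<noteq> [] \<and> hd w = X then g (tl w) else 0)"
proof -
  have eq: "\<forall>i \<in> {..length w}. word [X] (take i w) * g (drop i w) = (if i = 1 then (if w \<noteq> [] \<and> hd w = X then g (tl w) else 0) else 0)"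
  proof
    fix i assume i: "i \<in> {..length w}"
    show "word [X] (take i w) * g (drop i w) = (if i = 1 then (if w \<noteq> [] \<and> hd w = X then g (tl w) else 0) else 0)"
    proof (cases "i = 1")
      case True
      then show ?thesis by (cases w) (auto simp: word_apply)
    next
      case False
      have "take i w \<noteq> [X]"
      proof
        assume "take i w = [X]"
        then have "length (take i w) = 1" by simp
        then show False using i False by auto
      qed
      then show ?thesis using False by (simp add: word_apply)
    qed
  qed
  have "cat (word [X]) g w = (\<Sum>i\<in>{..length w}. (if i = 1 then (if w \<noteq> [] \<and> hd w = X then g (tl w) else 0) else 0))"
    unfolding cat_def by (rule sum.cong[OF refl]) (rule eq[rule_format])
  also have "\<dots> = (if w \<noteq> [] \<and> hd w = X then g (tl w) else 0)"
    by (cases w) (auto simp: Suc_le_eq)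
  finally show ?thesis .
qed

lemma cat_Y: "cat g (word [Y]) w = (if w \<noteq> [] \<and> last w = Y then g (butlast w) else 0)"
proof -
  have eq: "\<forall>i \<in> {..length w}. g (take i w) * word [Y] (drop i w) = (if i = length w - 1 then (if w \<noteq> [] \<and> last w = Y then g (butlast w) else 0) else 0)"
  proof
    fix i assume i: "i \<in> {..length w}"
    show "g (take i w) * word [Y] (drop i w) = (if i = length w - 1 then (if w \<noteq> [] \<and> last w = Y then g (butlast w) else 0) else 0)"
    proof (cases "i = length w - 1")
      case True
      show ?thesis
      proof (cases "w = []")
        case True then show ?thesis by (simp add: word_apply)
      next
        case False
        have "drop (length w - 1) w = [last w]" using False
          by (metis append_butlast_last_id append_eq_conv_conj length_butlast)
        moreover have "take (length w - 1) w = butlast w" by (simp add: butlast_conv_take)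
        ultimately show ?thesis using True False by (auto simp: word_apply)
      qed
    next
      case False
      have "drop i w \<noteq> [Y]"
      proof
        assume "drop i w = [Y]"
        then have "length (drop i w) = 1" by simp
        then show False using i False by auto
      qed
      then show ?thesis using False by (simp add: word_apply)
    qed
  qed
  have "cat g (word [Y]) w = (\<Sum>i\<in>{..length w}. (if i = length w - 1 then (if w \<noteq> [] \<and> last w = Y then g (butlast w) else 0) else 0))"
    unfolding cat_def by (rule sum.cong[OF refl]) (rule eq[rule_format])
  also have "\<dots> = (if w \<noteq> [] \<and> last w = Y then g (butlast w) else 0)"
    by (cases w) auto
  finally show ?thesis .
qed

lemma xwy_apply: "xwy f w = (if w \<noteq> [] \<and> hd w = X then (if tl w \<noteq> [] \<and> last (tl w) = Y then f (butlast (tl w)) else 0) else 0)"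
  unfolding xwy_def cat_X cat_Y by simp

lemma Gf_Suc: "Gf q (Suc i) w = (if w \<noteq> [] \<and> last w = Y then Ef q i (butlast w) else 0)"
proof (induction w arbitrary: i)
  case Nil then show ?case by simp
next
  case (Cons l w)
  show ?case
  proof (cases l)
    case X
    then show ?thesis using Cons.IH[of "Suc i"] by (cases w) (auto simp: add.commute)
  next
    case Y
    show ?thesis
    proof (cases i)
      case 0
      then show ?thesis using Y by (cases w) auto
    next
      case (Suc i')
      then show ?thesis using Y Cons.IH[of i'] by (cases w) auto
    qed
  qed
qed

lemma Pk_pj: assumes d: "q - inverse q \<noteq> 0" and k: "1 \<le> k"
  shows "xwy (Cn q (k - 1)) w = pj k (Gf q 0) w"
proof (cases w)
  case Nil then show ?thesis by (simp add: xwy_apply pj_def)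
next
  case (Cons l w')
  show ?thesis
  proof (cases l)
    case Y then show ?thesis using Cons by (simp add: xwy_apply pj_def)
  next
    case X
    have g1: "Gf q 0 (X # w') = Gf q 1 w'" using qint_1[OF d] by simp
    show ?thesis
    proof (cases "w' \<noteq> [] \<and> last w' = Y")
      case True
      then have "w' = butlast w' @ [Y]" by (metis append_butlast_last_id)
      then have c: "cntX w' = cntX (butlast w')" by (metis cntX_append cntX_simps(1,3) add_0_right)
      show ?thesis using True X Cons k unfolding xwy_apply pj_def g1 Cn_pj[OF d]
        using Gf_Suc[of q 0 w'] c qint_1[OF d] by auto
    next
      case False
      then show ?thesis using X Cons unfolding xwy_apply pj_def g1 using Gf_Suc[of q 0 w'] by auto
    qed
  qed
qed

lemma pj0_Gf0: "pj 0 (Gf q 0) w = 0"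
  by (cases w rule: list.exhaust; case_tac "w = []"; auto simp: pj_def) (metis Gf.simps(2,3) cntX_simps(2,3) letter.exhaust nat.distinct(1))



lemma qsh_cnt: "qsh q a b w \<noteq> 0 \<Longrightarrow> cntX w = cntX a + cntX b"
proof (induction q a b arbitrary: w rule: qsh.induct)
  case (1 q v)
  then show ?case by (auto simp: word_apply split: if_splits)
next
  case (2 q a u)
  then show ?case by (auto simp: word_apply split: if_splits)
next
  case (3 q a u b v)
  show ?case
  proof (cases w)
    case Nil
    then show ?thesis using 3 by simp
  next
    case (Cons d w')
    have "qsh q u (b # v) w' \<noteq> 0 \<and> d = a \<or> qsh q (a # u) v w' \<noteq> 0 \<and> d = b"
      using 3(3) Cons by (auto split: if_splits)
    then show ?thesis using 3(1,2) Cons by (cases d; cases a; cases b) auto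
  qed
qed

lemma term_split:
  assumes "cntX w = n"
  shows "(\<Sum>k\<le>n. pj k f a * pj (n-k) g b * qsh q a b w) = f a * g b * qsh q a b w"
proof (cases "qsh q a b w = 0")
  case True then show ?thesis by simp
next
  case False
  then have c: "cntX a + cntX b = n" using qsh_cnt assms by metis
  have "(\<Sum>k\<le>n. pj k f a * pj (n-k) g b * qsh q a b w) = (\<Sum>k\<le>n. if k = cntX a then f a * g b * qsh q a b w else 0)"
    by (rule sum.cong) (use c in \<open>auto simp: pj_def\<close>)
  also have "\<dots> = f a * g b * qsh q a b w" using c by simp
  finally show ?thesis .
qed

lemma term_split':
  assumes "cntX w = n"
  shows "(\<Sum>k\<le>n. pj (n-k) f a * pj k g b * qsh q a b w) = f a * g b * qsh q a b w"
proof (cases "qsh q a b w = 0")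
  case True then show ?thesis by simp
next
  case False
  then have c: "cntX a + cntX b = n" using qsh_cnt assms by metis
  have "(\<Sum>k\<le>n. pj (n-k) f a * pj k g b * qsh q a b w) = (\<Sum>k\<le>n. if k = cntX b then f a * g b * qsh q a b w else 0)"
    by (rule sum.cong) (use c in \<open>auto simp: pj_def\<close>)
  also have "\<dots> = f a * g b * qsh q a b w" using c by simp
  finally show ?thesis .
qed

lemma pj_star_gen:
  assumes "\<And>a b. cntX w = n \<Longrightarrow> (\<Sum>k\<le>n. F k a * G k b * qsh q a b w) = f a * g b * qsh q a b w"
    and "\<And>k a b. k \<le> n \<Longrightarrow> F k a \<noteq> 0 \<Longrightarrow> G k b \<noteq> 0 \<Longrightarrow> qsh q a b w \<noteq> 0 \<Longrightarrow> cntX w = n"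
  shows "pj n (star q f g) w = (\<Sum>k\<le>n. star q (F k) (G k) w)"
proof (cases "cntX w = n")
  case True
  have "(\<Sum>k\<le>n. star q (F k) (G k) w) = (\<Sum>k\<le>n. \<Sum>a\<in>W (length w). \<Sum>b\<in>W (length w). F k a * G k b * qsh q a b w)"
    unfolding star_W ..
  also have "\<dots> = (\<Sum>a\<in>W (length w). \<Sum>k\<le>n. \<Sum>b\<in>W (length w). F k a * G k b * qsh q a b w)"
    by (rule sum.swap)
  also have "\<dots> = (\<Sum>a\<in>W (length w). \<Sum>b\<in>W (length w). \<Sum>k\<le>n. F k a * G k b * qsh q a b w)"
    by (rule sum.cong[OF refl], rule sum.swap)
  also have "\<dots> = star q f g w"
    unfolding star_W using assms(1)[OF True] by simp
  finally show ?thesis using True by (simp add: pj_def)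
next
  case False
  have "star q (F k) (G k) w = 0" if "k \<le> n" for k
    unfolding star_W using assms(2)[OF that] False
    by (intro sum.neutral ballI) (metis mult_eq_0_iff)
  then show ?thesis using False by (simp add: pj_def)
qed

lemma pj_star: "pj n (star q f g) w = (\<Sum>k\<le>n. star q (pj k f) (pj (n-k) g) w)"
  by (rule pj_star_gen[OF term_split]) (auto simp: pj_def split: if_splits dest!: qsh_cnt)

lemma pj_star': "pj n (star q f g) w = (\<Sum>k\<le>n. star q (pj (n-k) f) (pj k g) w)"
  by (rule pj_star_gen[OF term_split']) (auto simp: pj_def split: if_splits dest!: qsh_cnt)



lemma pj_sc: "pj k (sc s f) = (\<lambda>w. s^k * pj k f w)" by (auto simp: pj_def sc_def fun_eq_iff)

lemma graded:
  fixes q :: "'a::field"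
  assumes q: "q \<noteq> 0" and qnz: "\<And>k. k > 0 \<Longrightarrow> qint q (int k) \<noteq> 0" and d: "q - inverse q \<noteq> 0"
  shows "(q - inverse q) * (of_nat n * Cn q n w) = (\<Sum>k\<in>{1..n}. q^(2*k) * star q (xwy (Cn q (k-1))) (Cn q (n-k)) w
          - inverse (q^(2*k)) * star q (Cn q (n-k)) (xwy (Cn q (k-1))) w)"
proof -
  let ?SA = "star q (sc (q^2) (Gf q 0)) (Ef q 0)"
  let ?SB = "star q (Ef q 0) (sc (inverse (q^2)) (Gf q 0))"
  have CE: "pj m (Ef q 0) = Cn q m" for m using Cn_pj[OF d] by (simp add: fun_eq_iff)
  have PG: "k \<noteq> 0 \<Longrightarrow> pj k (Gf q 0) = xwy (Cn q (k-1))" for k using Pk_pj[OF d] by (simp add: fun_eq_iff)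
  have PG0: "pj 0 (Gf q 0) = (\<lambda>_. 0)" by (rule ext) (rule pj0_Gf0)
  have "(q - inverse q) * (of_nat n * Cn q n w) = pj n (\<lambda>w. (q - inverse q) * (of_nat (cntX w) * Ef q 0 w)) w"
    by (simp add: pj_def Cn_pj[OF d])
  also have "\<dots> = pj n ?SA w - pj n ?SB w"
    using Zid[OF q qnz d, of _ 0] by (simp add: pj_def)
  also have "pj n ?SA w = (\<Sum>k\<le>n. q^(2*k) * star q (pj k (Gf q 0)) (Cn q (n-k)) w)"
    unfolding pj_star pj_sc CE by (simp add: star_scale_left power_mult)
  also have "\<dots> = (\<Sum>k\<in>{1..n}. q^(2*k) * star q (xwy (Cn q (k-1))) (Cn q (n-k)) w)"
  proof -
    have "{..n} = insert 0 {1..n}" by auto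
    then show ?thesis by (simp add: PG0 PG)
  qed
  also have "pj n ?SB w = (\<Sum>k\<le>n. inverse (q^(2*k)) * star q (Cn q (n-k)) (pj k (Gf q 0)) w)"
    unfolding pj_star' pj_sc CE by (simp add: star_scale_right power_mult power_inverse)
  also have "\<dots> = (\<Sum>k\<in>{1..n}. inverse (q^(2*k)) * star q (Cn q (n-k)) (xwy (Cn q (k-1))) w)"
  proof -
    have "{..n} = insert 0 {1..n}" by auto
    then show ?thesis by (simp add: PG0 PG)
  qed
  finally show ?thesis by (simp add: sum_subtractf)
qed



definition Sx :: "nat \<Rightarrow> nat list set" where
  "Sx m = {ks. set ks \<subseteq> {1..m} \<and> sum_list ks = m}"

lemma len_le_sum: "set ks \<subseteq> {1..m} \<Longrightarrow> length ks \<le> sum_list ks"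
  by (induction ks) auto

lemma finite_Sx: "finite (Sx m)"
proof -
  have "Sx m \<subseteq> {ks. set ks \<subseteq> {1..m} \<and> length ks \<le> m}"
    unfolding Sx_def using len_le_sum by fastforce
  moreover have "finite {ks. set ks \<subseteq> {1..m} \<and> length ks \<le> m}"
    by (rule finite_lists_length_le) simp
  ultimately show ?thesis by (rule finite_subset)
qed

lemma hp_def': "homog_poly q g m f \<longleftrightarrow> (\<exists>c. \<forall>w. f w = (\<Sum>ks\<in>Sx m. c ks * star_mono q g ks w))"
  unfolding homog_poly_def Sx_def ..

lemma hp_mono: "ks \<in> Sx m \<Longrightarrow> homog_poly q g m (star_mono q g ks)"
  unfolding hp_def'
proof (rule exI[of _ "\<lambda>ks'. if ks' = ks then 1 else 0"], intro allI impI)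
  fix w assume ks: "ks \<in> Sx m"
  have "(\<Sum>ks'\<in>Sx m. (if ks' = ks then 1 else 0) * star_mono q g ks' w) = (\<Sum>ks'\<in>Sx m. if ks' = ks then star_mono q g ks' w else 0)"
    by (rule sum.cong) auto
  also have "\<dots> = star_mono q g ks w" using ks finite_Sx by simp
  finally show "star_mono q g ks w = (\<Sum>ks'\<in>Sx m. (if ks' = ks then 1 else 0) * star_mono q g ks' w)" by simp
qed

lemma hp_add: "homog_poly q g m f \<Longrightarrow> homog_poly q g m f' \<Longrightarrow> homog_poly q g m (\<lambda>w. f w + f' w)"
  unfolding hp_def'
proof (elim exE)
  fix c c' assume c: "\<forall>w. f w = (\<Sum>ks\<in>Sx m. c ks * star_mono q g ks w)" and c': "\<forall>w. f' w = (\<Sum>ks\<in>Sx m. c' ks * star_mono q g ks w)"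
  show "\<exists>c. \<forall>w. f w + f' w = (\<Sum>ks\<in>Sx m. c ks * star_mono q g ks w)"
    by (rule exI[of _ "\<lambda>ks. c ks + c' ks"]) (simp add: c c' distrib_right sum.distrib)
qed

lemma hp_scale: "homog_poly q g m f \<Longrightarrow> homog_poly q g m (\<lambda>w. a * f w)"
  unfolding hp_def'
proof (elim exE)
  fix c assume c: "\<forall>w. f w = (\<Sum>ks\<in>Sx m. c ks * star_mono q g ks w)"
  show "\<exists>c. \<forall>w. a * f w = (\<Sum>ks\<in>Sx m. c ks * star_mono q g ks w)"
    by (rule exI[of _ "\<lambda>ks. a * c ks"]) (simp add: c sum_distrib_left mult_ac)
qed

lemma hp_zero: "homog_poly q g m (\<lambda>w. 0)"
  unfolding hp_def' by (rule exI[of _ "\<lambda>_. 0"]) simp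

lemma hp_diff: "homog_poly q g m f \<Longrightarrow> homog_poly q g m f' \<Longrightarrow> homog_poly q g m (\<lambda>w. f w - f' w)"
  using hp_add[of q g m f "\<lambda>w. (-1) * f' w"] hp_scale[of q g m f' "-1"] by simp

lemma hp_sum: "finite I \<Longrightarrow> (\<And>i. i \<in> I \<Longrightarrow> homog_poly q g m (F i)) \<Longrightarrow> homog_poly q g m (\<lambda>w. \<Sum>i\<in>I. F i w)"
proof (induction I rule: finite_induct)
  case empty then show ?case using hp_zero by simp
next
  case (insert x J)
  then show ?case using hp_add[of q g m "F x" "\<lambda>w. sum (\<lambda>i. F i w) J"] by simp
qed

lemma hp_cong: "homog_poly q g m f \<Longrightarrow> (\<And>w. f w = f' w) \<Longrightarrow> homog_poly q g m f'"
proof -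
  assume "homog_poly q g m f" "\<And>w. f w = f' w"
  moreover then have "f = f'" by auto
  ultimately show ?thesis by simp
qed

lemma hp_deg: "homog_poly q g m f \<Longrightarrow> m = m' \<Longrightarrow> homog_poly q g m' f" by simp

lemma star_mono_Nil: "star_mono q g [] = word []" by (simp add: star_mono_def)
lemma star_mono_Cons: "star_mono q g (k # ks) = star q (g k) (star_mono q g ks)" by (simp add: star_mono_def)

lemma star_mono_append: assumes q: "q \<noteq> 0"
  shows "star q (star_mono q g ks) (star_mono q g ls) w = star_mono q g (ks @ ls) w"
proof (induction ks arbitrary: w)
  case Nil then show ?case by (simp add: star_mono_Nil star_unit_left)
next
  case (Cons k ks)
  have "star q (star_mono q g (k # ks)) (star_mono q g ls) w = star q (g k) (star q (star_mono q g ks) (star_mono q g ls)) w"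
    unfolding star_mono_Cons by (rule star_assoc[OF q])
  also have "\<dots> = star q (g k) (star_mono q g (ks @ ls)) w"
    by (rule star_cong) (simp_all add: Cons.IH)
  finally show ?case by (simp add: star_mono_Cons)
qed

lemma hp_star: assumes q: "q \<noteq> 0" and f: "homog_poly q g a f" and h: "homog_poly q g b h"
  shows "homog_poly q g (a + b) (star q f h)"
proof -
  obtain c where c: "\<forall>w. f w = (\<Sum>ks\<in>Sx a. c ks * star_mono q g ks w)" using f unfolding hp_def' by blast
  obtain d where d: "\<forall>w. h w = (\<Sum>ks\<in>Sx b. d ks * star_mono q g ks w)" using h unfolding hp_def' by blast
  have fe: "f = (\<lambda>w. \<Sum>ks\<in>Sx a. c ks * star_mono q g ks w)" using c by auto
  have he: "h = (\<lambda>w. \<Sum>ks\<in>Sx b. d ks * star_mono q g ks w)" using d by auto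
  have eq: "star q f h w = (\<Sum>ks\<in>Sx a. c ks * (\<Sum>ls\<in>Sx b. d ls * star_mono q g (ks @ ls) w))" for w
    unfolding fe he
    by (simp add: star_sum_left star_sum_right star_scale_left star_scale_right star_mono_append[OF q] sum_distrib_left mult_ac)
  have "homog_poly q g (a + b) (\<lambda>w. \<Sum>ks\<in>Sx a. c ks * (\<Sum>ls\<in>Sx b. d ls * star_mono q g (ks @ ls) w))"
  proof (rule hp_sum[OF finite_Sx])
    fix ks assume ks: "ks \<in> Sx a"
    show "homog_poly q g (a + b) (\<lambda>w. c ks * (\<Sum>ls\<in>Sx b. d ls * star_mono q g (ks @ ls) w))"
    proof (rule hp_scale, rule hp_sum[OF finite_Sx])
      fix ls assume ls: "ls \<in> Sx b"
      have "ks @ ls \<in> Sx (a + b)" using ks ls unfolding Sx_def by auto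
      then show "homog_poly q g (a + b) (\<lambda>w. d ls * star_mono q g (ks @ ls) w)"
        by (intro hp_scale hp_mono)
    qed
  qed
  then show ?thesis by (rule hp_cong) (simp add: eq)
qed

lemma hp_gen: assumes q: "q \<noteq> 0" and k: "1 \<le> k" shows "homog_poly q g k (g k)"
proof -
  have "[k] \<in> Sx k" using k unfolding Sx_def by auto
  then have "homog_poly q g k (star_mono q g [k])" by (rule hp_mono)
  then show ?thesis by (rule hp_cong) (simp add: star_mono_Cons star_mono_Nil star_unit_right)
qed

lemma hp_unit: "homog_poly q g 0 (word [])"
proof -
  have "[] \<in> Sx 0" unfolding Sx_def by auto
  then have "homog_poly q g 0 (star_mono q g [])" by (rule hp_mono)
  then show ?thesis by (simp add: star_mono_Nil)
qed



lemma Cn0: assumes d: "q - inverse q \<noteq> 0" shows "Cn q 0 = word []"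
proof
  fix w
  have c: "catalan []" by (simp add: catalan_def)
  show "Cn q 0 w = word [] w"
    unfolding Cn_def word_apply using c qint_1[OF d] by auto
qed

lemma inv_solve: fixes a c s :: "'a::field" shows "a \<noteq> 0 \<Longrightarrow> a * c = s \<Longrightarrow> inverse a * s = c"
  by auto

lemma part1:
  fixes q :: "'a::field_char_0"
  assumes q: "q \<noteq> 0" and qnz: "\<And>k. k > 0 \<Longrightarrow> qint q (int k) \<noteq> 0" and d: "q - inverse q \<noteq> 0"
  shows "homog_poly q (\<lambda>k. xwy (Cn q (k - 1))) n (Cn q n)"
proof (induction n rule: less_induct)
  case (less n)
  let ?g = "\<lambda>k. xwy (Cn q (k - 1))"
  show ?case
  proof (cases "n = 0")
    case True
    then show ?thesis using hp_unit Cn0[OF d] by simp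
  next
    case False
    have T: "homog_poly q ?g n (\<lambda>w. q^(2*k) * star q (xwy (Cn q (k-1))) (Cn q (n-k)) w
          - inverse (q^(2*k)) * star q (Cn q (n-k)) (xwy (Cn q (k-1))) w)" if k: "k \<in> {1..n}" for k
    proof (rule hp_diff; rule hp_scale)
      have g: "homog_poly q ?g k (xwy (Cn q (k-1)))" using hp_gen[OF q, of k ?g] k by simp
      have c: "homog_poly q ?g (n-k) (Cn q (n-k))" using less.IH[of "n-k"] k by simp
      show "homog_poly q ?g n (star q (xwy (Cn q (k - 1))) (Cn q (n - k)))"
        using hp_star[OF q g c] k by simp
      show "homog_poly q ?g n (star q (Cn q (n - k)) (xwy (Cn q (k - 1))))"
        using hp_star[OF q c g] k by simp
    qed
    have S: "homog_poly q ?g n (\<lambda>w. inverse ((q - inverse q) * of_nat n) * (\<Sum>k\<in>{1..n}. q^(2*k) * star q (xwy (Cn q (k-1))) (Cn q (n-k)) w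
          - inverse (q^(2*k)) * star q (Cn q (n-k)) (xwy (Cn q (k-1))) w))"
      by (rule hp_scale, rule hp_sum) (use T in auto)
    show ?thesis
    proof (rule hp_cong[OF S])
      fix w
      have "(q - inverse q) * (of_nat n * Cn q n w) = (\<Sum>k\<in>{1..n}. q^(2*k) * star q (xwy (Cn q (k-1))) (Cn q (n-k)) w
          - inverse (q^(2*k)) * star q (Cn q (n-k)) (xwy (Cn q (k-1))) w)"
        by (rule graded[OF q qnz d])
      then show "inverse ((q - inverse q) * of_nat n) * (\<Sum>k\<in>{1..n}. q^(2*k) * star q (xwy (Cn q (k-1))) (Cn q (n-k)) w
          - inverse (q^(2*k)) * star q (Cn q (n-k)) (xwy (Cn q (k-1))) w) = Cn q n w"
        using d False by (metis (no_types, lifting) inv_solve mult.assoc mult_eq_0_iff of_nat_eq_0_iff)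
    qed
  qed
qed

lemma part2:
  fixes q :: "'a::field_char_0"
  assumes q: "q \<noteq> 0" and qnz: "\<And>k. k > 0 \<Longrightarrow> qint q (int k) \<noteq> 0" and d: "q - inverse q \<noteq> 0"
  shows "1 \<le> n \<Longrightarrow> homog_poly q (\<lambda>k. Cn q k) n (xwy (Cn q (n - 1)))"
proof (induction n rule: less_induct)
  case (less n)
  let ?g = "\<lambda>k. Cn q k"
  let ?T = "\<lambda>k w. q^(2*k) * star q (xwy (Cn q (k-1))) (Cn q (n-k)) w
          - inverse (q^(2*k)) * star q (Cn q (n-k)) (xwy (Cn q (k-1))) w"
  define D where "D = q^(2*n) - inverse (q^(2*n))"
  have D: "D \<noteq> 0"
  proof
    assume "D = 0"
    then have "qint q (int (2*n)) = 0" unfolding D_def qint_nat by simp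
    then show False using qnz[of "2*n"] less.prems by simp
  qed
  have Tn: "?T n w = D * xwy (Cn q (n-1)) w" for w
    by (simp add: Cn0[OF d] star_unit_left star_unit_right D_def algebra_simps)
  have split: "{1..n} = insert n {1..n-1}" using less.prems by auto
  have key: "xwy (Cn q (n-1)) w = inverse D * ((q - inverse q) * of_nat n * Cn q n w - (\<Sum>k\<in>{1..n-1}. ?T k w))" for w
  proof -
    have "(q - inverse q) * (of_nat n * Cn q n w) = (\<Sum>k\<in>{1..n}. ?T k w)"
      by (rule graded[OF q qnz d])
    also have "\<dots> = ?T n w + (\<Sum>k\<in>{1..n-1}. ?T k w)"
      unfolding split by (subst sum.insert) auto
    finally show ?thesis unfolding Tn using D by (simp add: field_simps)
  qed
  have T: "homog_poly q ?g n (?T k)" if k: "k \<in> {1..n-1}" for k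
  proof (rule hp_diff; rule hp_scale)
    have "k < n" "1 \<le> k" using k less.prems by auto
    then have g: "homog_poly q ?g k (xwy (Cn q (k-1)))" using less.IH[of k] by simp
    have "1 \<le> n - k" using k by auto
    then have c: "homog_poly q ?g (n-k) (Cn q (n-k))" using hp_gen[OF q, of "n-k" ?g] by simp
    have kn: "k + (n-k) = n" "(n-k) + k = n" using k by auto
    show "homog_poly q ?g n (star q (xwy (Cn q (k - 1))) (Cn q (n - k)))"
      using hp_star[OF q g c] kn by simp
    show "homog_poly q ?g n (star q (Cn q (n - k)) (xwy (Cn q (k - 1))))"
      using hp_star[OF q c g] kn by simp
  qed
  have S: "homog_poly q ?g n (\<lambda>w. inverse D * ((q - inverse q) * of_nat n * Cn q n w - (\<Sum>k\<in>{1..n-1}. ?T k w)))"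
  proof (rule hp_scale, rule hp_diff)
    show "homog_poly q ?g n (\<lambda>w. (q - inverse q) * of_nat n * Cn q n w)"
      by (rule hp_scale, rule hp_gen[OF q less.prems])
    show "homog_poly q ?g n (\<lambda>w. \<Sum>k\<in>{1..n-1}. ?T k w)"
      by (rule hp_sum) (use T in auto)
  qed
  show ?case by (rule hp_cong[OF S]) (rule key[symmetric])
qed

theorem corollary8p2:
  fixes q :: "'a::field_char_0" and n :: nat
  assumes "q \<noteq> 0" and "\<forall>m::nat. m > 0 \<longrightarrow> q ^ m \<noteq> 1" and "n \<ge> 1"
  shows "homog_poly q (\<lambda>k. xwy (Cn q (k - 1))) n (Cn q n)
       \<and> homog_poly q (\<lambda>k. Cn q k) n (xwy (Cn q (n - 1)))"
proof -
  have q: "q \<noteq> 0" by fact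
  have d: "q - inverse q \<noteq> 0"
  proof
    assume "q - inverse q = 0"
    then have "q * q = 1" using q by (simp add: field_simps)
    then show False using assms(2)[rule_format, of 2] by (simp add: power2_eq_square)
  qed
  have qnz: "qint q (int k) \<noteq> 0" if k: "k > 0" for k
  proof
    assume "qint q (int k) = 0"
    then have "q ^ k - inverse (q ^ k) = 0" unfolding qint_nat using d by simp
    then have "q ^ k * q ^ k = 1" using q by (simp add: field_simps)
    then have "q ^ (2 * k) = 1" by (simp add: power_add mult_2)
    then show False using assms(2)[rule_format, of "2*k"] k by simp
  qed
  show ?thesis using part1[OF q qnz d] part2[OF q qnz d] assms(3) by blast
qed


end
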